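(* Let $\mathbf A$ be a finite relational structure whose relations include three binary relations $\alpha^{\mathbf A},\beta^{\mathbf A},\gamma^{\mathbf A}$, and suppose: (a) there is a finite set $\mathcal P$ of pentagons such that for each $\mathbf P\in\mathcal P$ the domain $P$ is a subset of $A$ and $\alpha^{\mathbf P}=\alpha^{\mathbf A}\cap P^2$, $\beta^{\mathbf P}=\beta^{\mathbf A}\cap P^2$, $\gamma^{\mathbf P}=\gamma^{\mathbf A}\cap P^2$; (b) for every $k\ge1$ there is a relation $D_k\subseteq A^k$, primitive-positive definable over $\mathbf A$, such that $(a_1,\dots,a_k)\in D_k$ iff some $\mathbf P\in\mathcal P$ has all of $a_1,\dots,a_k$ in its domain. Let $\mathbf P\in\mathcal P$ be such that $\mathbb L(\mathbf P)$ is non-trivial and the domain of $\mathbf P$ is not contained in the domain of any other pentagon in $\mathcal P$. Then there is a linear reduction from $\mathsf{Pent\text{-}Eval}(\mathbf P)$ to $\exists\mathrm{CSP}(\mathbf A)$.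
   Context: For a set $X$, $\mathrm{Eq}(X)$ is the lattice of equivalence relations on $X$, with bottom $0_X$ (equality) and top $1_X=X^2$. A pentagon is a finite structure $\mathbf P$ with domain $P$ and three equivalence relations $\alpha^{\mathbf P},\beta^{\mathbf P},\gamma^{\mathbf P}$ on $P$ with $\alpha^{\mathbf P}\le\beta^{\mathbf P}$, $\beta^{\mathbf P}\wedge\gamma^{\mathbf P}=0_P$, $\beta^{\mathbf P}\circ\gamma^{\mathbf P}=1_P$, $\alpha^{\mathbf P}\vee\gamma^{\mathbf P}=1_P$ in $\mathrm{Eq}(P)$. Then $P=B_{\mathbf P}\times C_{\mathbf P}$ with $\beta^{\mathbf P},\gamma^{\mathbf P}$ the kernels of the projections onto $B_{\mathbf P}$, $C_{\mathbf P}$. For $b\in B_{\mathbf P}$, $\alpha^{\mathbf P}_b=\{(c,c')\in C_{\mathbf P}^2\mid ((b,c),(b,c'))\in\alpha^{\mathbf P}\}$; $\mathbb L(\mathbf P)$ is the sublattice of $\mathrm{Eq}(C_{\mathbf P})$ generated by all $\alpha^{\mathbf P}_b$; non-trivial means more than one element. $\mathbf P_2$ is the 2-sorted structure with sorts $B_{\mathbf P}$, $C_{\mathbf P}$ and ternary relation $R=\{(b,c,c')\mid (c,c')\in\alpha^{\mathbf P}_b\}$ (first argument of first sort, others of second sort). $\mathsf{Pent\text{-}Eval}(\mathbf P)$: instances are a primitive-positive formula $\phi(X,Y)$ over $\{R\}$ with free variables $X$ of first sort and $Y$ of second sort, and weights on $X\cup Y$ summing to 1; assignments map $X\to B_{\mathbf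 P}$, $Y\to C_{\mathbf P}$, satisfying iff $\phi$ holds in $\mathbf P_2$. $\exists\mathrm{CSP}(\mathbf A)$: instances $(V,V^\exists,\mathcal C,w)$ with constraints using relations of $\mathbf A$ on free variables $V$ and existential variables $V^\exists$, weights on $V$ summing to 1; $f:V\to A$ satisfying iff it extends to a satisfying assignment. $\mathrm{dist}_{\mathcal I}(f)$ is the minimum weight of free variables on which $f$ differs from a satisfying assignment. A linear reduction from $\mathcal P$ to $\mathcal P'$: given $(\mathcal I,f)$ with $\mathcal I$ on variable set $V$, it (possibly randomly) produces $(\mathcal I',f')$ with $|V'|=O(|V|)$ such that (i) $f$ satisfying implies $f'$ satisfying; (ii) for a constant $c_1>0$ and every $\epsilon\in(0,1)$, $\mathrm{dist}_{\mathcal I}(f)\ge\epsilon$ implies $\Pr[\mathrm{dist}_{\mathcal I'}(f')\ge c_1\epsilon]\ge 9/10$; (iii) each value of $f'$ is computable with $O(1)$ queries to $f$. *)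

theory Defs
  imports "HOL-Probability.Probability_Mass_Function"
begin

text \<open>A relational structure with universe the (finite) type 'a: relation symbols of type 'r,
  arity ar, interpretation rel.  A binary relation symbol s gives the binary relation binrel.\<close>

definition binrel :: "('r \<Rightarrow> 'a list set) \<Rightarrow> 'r \<Rightarrow> 'a rel" where
  "binrel rel s = {(x, y). [x, y] \<in> rel s}"

definition pp_definable ::
  "('r \<Rightarrow> 'a list set) \<Rightarrow> ('r \<Rightarrow> nat) \<Rightarrow> nat \<Rightarrow> 'a list set \<Rightarrow> bool" where
  "pp_definable rel ar k D \<longleftrightarrow>
     (\<exists>(E::nat set) (cons :: ('r \<times> nat list) list) (eqs :: (nat \<times> nat) list).
        finite E \<and> E \<inter> {0..<k} = {} \<and>
        (\<forall>(r, xs) \<in> set cons. length xs = ar r \<and> set xs \<subseteq> {0..<k} \<union> E) \<and>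
        (\<forall>(u, v) \<in> set eqs. u \<in> {0..<k} \<union> E \<and> v \<in> {0..<k} \<union> E) \<and>
        (\<forall>as. length as = k \<longrightarrow>
           (as \<in> D \<longleftrightarrow>
             (\<exists>g :: nat \<Rightarrow> 'a. (\<forall>i<k. g i = as ! i) \<and>
                 (\<forall>(r, xs) \<in> set cons. map g xs \<in> rel r) \<and>
                 (\<forall>(u, v) \<in> set eqs. g u = g v)))))"

record 'r csp_inst =
  cvars :: "nat set"
  cevars :: "nat set"
  ccons :: "('r \<times> nat list) list"
  cweight :: "nat \<Rightarrow> real"

definition csp_wf :: "('r \<Rightarrow> nat) \<Rightarrow> 'r csp_inst \<Rightarrow> bool" where
  "csp_wf ar I \<longleftrightarrow> finite (cvars I) \<and> finite (cevars I) \<and> cvars I \<inter> cevars I = {} \<and>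
     (\<forall>(r, xs) \<in> set (ccons I). length xs = ar r \<and> set xs \<subseteq> cvars I \<union> cevars I) \<and>
     (\<forall>v \<in> cvars I. 0 \<le> cweight I v) \<and> (\<Sum>v\<in>cvars I. cweight I v) = 1"

definition csp_sat :: "('r \<Rightarrow> 'a list set) \<Rightarrow> 'r csp_inst \<Rightarrow> (nat \<Rightarrow> 'a) \<Rightarrow> bool" where
  "csp_sat rel I f \<longleftrightarrow>
     (\<exists>g. (\<forall>v \<in> cvars I. g v = f v) \<and> (\<forall>(r, xs) \<in> set (ccons I). map g xs \<in> rel r))"

text \<open>Weighted distance to the set of satisfying assignments (infinite if there is none).\<close>

definition wdist :: "'v set \<Rightarrow> ('v \<Rightarrow> real) \<Rightarrow> ('v \<Rightarrow> 'x) set \<Rightarrow> ('v \<Rightarrow> 'x) \<Rightarrow> ereal" where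
  "wdist V w S f = (INF g\<in>S. ereal (\<Sum>v \<in> {v\<in>V. f v \<noteq> g v}. w v))"

definition csp_dist :: "('r \<Rightarrow> 'a list set) \<Rightarrow> 'r csp_inst \<Rightarrow> (nat \<Rightarrow> 'a) \<Rightarrow> ereal" where
  "csp_dist rel I f = wdist (cvars I) (cweight I) {g. csp_sat rel I g} f"

definition is_pentagon :: "'a set \<Rightarrow> 'a rel \<Rightarrow> 'a rel \<Rightarrow> 'a rel \<Rightarrow> bool" where
  "is_pentagon P a b c \<longleftrightarrow> finite P \<and> equiv P a \<and> equiv P b \<and> equiv P c \<and>
     a \<subseteq> b \<and> b \<inter> c = Id_on P \<and> b O c = P \<times> P \<and> (a \<union> c)\<^sup>+ = P \<times> P"

text \<open>P = B x C with B = P/beta (first coordinate) and C = P/gamma (second coordinate);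
  the point (bb, cc) of B x C is the unique element of bb \<inter> cc.\<close>

definition pent_B :: "'a set \<Rightarrow> 'a rel \<Rightarrow> 'a set set" where
  "pent_B P b = P // b"

definition pent_C :: "'a set \<Rightarrow> 'a rel \<Rightarrow> 'a set set" where
  "pent_C P c = P // c"

definition pent_alpha :: "'a set \<Rightarrow> 'a rel \<Rightarrow> 'a rel \<Rightarrow> 'a set \<Rightarrow> 'a set rel" where
  "pent_alpha P a c bb = {(x, y). x \<in> pent_C P c \<and> y \<in> pent_C P c \<and>
       (\<exists>p \<in> bb \<inter> x. \<exists>p' \<in> bb \<inter> y. (p, p') \<in> a)}"

inductive_set gen_sublattice :: "'c rel set \<Rightarrow> 'c rel set" for G where
  gen: "x \<in> G \<Longrightarrow> x \<in> gen_sublattice G"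
| meet: "x \<in> gen_sublattice G \<Longrightarrow> y \<in> gen_sublattice G \<Longrightarrow> x \<inter> y \<in> gen_sublattice G"
| join: "x \<in> gen_sublattice G \<Longrightarrow> y \<in> gen_sublattice G \<Longrightarrow> (x \<union> y)\<^sup>+ \<in> gen_sublattice G"

definition pent_L :: "'a set \<Rightarrow> 'a rel \<Rightarrow> 'a rel \<Rightarrow> 'a rel \<Rightarrow> 'a set rel set" where
  "pent_L P a b c = gen_sublattice {pent_alpha P a c bb | bb. bb \<in> pent_B P b}"

definition nontrivial :: "'x set \<Rightarrow> bool" where
  "nontrivial L \<longleftrightarrow> (\<exists>x\<in>L. \<exists>y\<in>L. x \<noteq> y)"

definition pent_R :: "'a set \<Rightarrow> 'a rel \<Rightarrow> 'a rel \<Rightarrow> 'a rel \<Rightarrow> ('a set \<times> 'a set \<times> 'a set) set" where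
  "pent_R P a b c = {(bb, x, y). bb \<in> pent_B P b \<and> (x, y) \<in> pent_alpha P a c bb}"

text \<open>A pp-formula over {R}: free variables of the first sort (pX) and second sort (pY),
  existential variables of the first (pEX) and second (pEY) sort, R-atoms and equality atoms,
  and weights on the free variables.  Values of both sorts are represented as 'a set
  (beta-classes resp. gamma-classes).\<close>

record pent_inst =
  pX :: "nat set"
  pY :: "nat set"
  pEX :: "nat set"
  pEY :: "nat set"
  patoms :: "(nat \<times> nat \<times> nat) list"
  peqs :: "(nat \<times> nat) list"
  pweight :: "nat \<Rightarrow> real"

definition pent_vars :: "pent_inst \<Rightarrow> nat set" where
  "pent_vars I = pX I \<union> pY I"

definition pent_wf :: "pent_inst \<Rightarrow> bool" where
  "pent_wf I \<longleftrightarrow> finite (pX I) \<and> finite (pY I) \<and> finite (pEX I) \<and> finite (pEY I) \<and>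
     pX I \<inter> pY I = {} \<and> pX I \<inter> pEX I = {} \<and> pX I \<inter> pEY I = {} \<and>
     pY I \<inter> pEX I = {} \<and> pY I \<inter> pEY I = {} \<and> pEX I \<inter> pEY I = {} \<and>
     (\<forall>(u, v, v') \<in> set (patoms I). u \<in> pX I \<union> pEX I \<and> v \<in> pY I \<union> pEY I \<and> v' \<in> pY I \<union> pEY I) \<and>
     (\<forall>(u, v) \<in> set (peqs I). (u \<in> pX I \<union> pEX I \<and> v \<in> pX I \<union> pEX I) \<or>
                                (u \<in> pY I \<union> pEY I \<and> v \<in> pY I \<union> pEY I)) \<and>
     (\<forall>v \<in> pent_vars I. 0 \<le> pweight I v) \<and> (\<Sum>v\<in>pent_vars I. pweight I v) = 1"

definition pent_assign :: "'a set \<Rightarrow> 'a rel \<Rightarrow> 'a rel \<Rightarrow> pent_inst \<Rightarrow> (nat \<Rightarrow> 'a set) \<Rightarrow> bool" where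
  "pent_assign P b c I f \<longleftrightarrow> (\<forall>v \<in> pX I. f v \<in> pent_B P b) \<and> (\<forall>v \<in> pY I. f v \<in> pent_C P c)"

definition pent_sat ::
  "'a set \<Rightarrow> 'a rel \<Rightarrow> 'a rel \<Rightarrow> 'a rel \<Rightarrow> pent_inst \<Rightarrow> (nat \<Rightarrow> 'a set) \<Rightarrow> bool" where
  "pent_sat P a b c I f \<longleftrightarrow>
     (\<exists>g. (\<forall>v \<in> pent_vars I. g v = f v) \<and>
          (\<forall>v \<in> pX I \<union> pEX I. g v \<in> pent_B P b) \<and> (\<forall>v \<in> pY I \<union> pEY I. g v \<in> pent_C P c) \<and>
          (\<forall>(u, v, v') \<in> set (patoms I). (g u, g v, g v') \<in> pent_R P a b c) \<and>
          (\<forall>(u, v) \<in> set (peqs I). g u = g v))"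

definition pent_dist ::
  "'a set \<Rightarrow> 'a rel \<Rightarrow> 'a rel \<Rightarrow> 'a rel \<Rightarrow> pent_inst \<Rightarrow> (nat \<Rightarrow> 'a set) \<Rightarrow> ereal" where
  "pent_dist P a b c I f = wdist (pent_vars I) (pweight I) {g. pent_sat P a b c I g} f"

text \<open>A problem is given by: well-formed instances (wf), the free variables
  of an instance (vars), admissible assignments (asg), satisfying assignments (sat) and the
  distance (dist).  A (randomized) reduction maps each instance I to a probability distribution
  over pairs (I', F), where I' is the produced instance and F computes f' from f; each value
  of F f depends on at most q values of f (O(1) queries).\<close>

definition linear_reduction ::
  "('i \<Rightarrow> bool) \<Rightarrow> ('i \<Rightarrow> 'v set) \<Rightarrow> ('i \<Rightarrow> ('v \<Rightarrow> 'x) \<Rightarrow> bool) \<Rightarrow>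
   ('i \<Rightarrow> ('v \<Rightarrow> 'x) \<Rightarrow> bool) \<Rightarrow> ('i \<Rightarrow> ('v \<Rightarrow> 'x) \<Rightarrow> ereal) \<Rightarrow>
   ('j \<Rightarrow> bool) \<Rightarrow> ('j \<Rightarrow> 'w set) \<Rightarrow> ('j \<Rightarrow> ('w \<Rightarrow> 'y) \<Rightarrow> bool) \<Rightarrow>
   ('j \<Rightarrow> ('w \<Rightarrow> 'y) \<Rightarrow> bool) \<Rightarrow> ('j \<Rightarrow> ('w \<Rightarrow> 'y) \<Rightarrow> ereal) \<Rightarrow> bool" where
  "linear_reduction wfi vars asg sat dst wfi' vars' asg' sat' dst' \<longleftrightarrow>
     (\<exists>(red :: 'i \<Rightarrow> ('j \<times> (('v \<Rightarrow> 'x) \<Rightarrow> ('w \<Rightarrow> 'y))) pmf) (c0::nat) (c1::real) (q::nat).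
        c1 > 0 \<and>
        (\<forall>I. wfi I \<longrightarrow>
           (\<forall>(I', F) \<in> set_pmf (red I).
               wfi' I' \<and> card (vars' I') \<le> c0 * card (vars I) \<and>
               (\<forall>v' \<in> vars' I'. \<exists>S \<subseteq> vars I. card S \<le> q \<and>
                   (\<forall>f g. (\<forall>v\<in>S. f v = g v) \<longrightarrow> F f v' = F g v')) \<and>
               (\<forall>f. asg I f \<longrightarrow> asg' I' (F f)) \<and>
               (\<forall>f. asg I f \<longrightarrow> sat I f \<longrightarrow> sat' I' (F f))) \<and>
           (\<forall>f \<epsilon>. asg I f \<longrightarrow> 0 < \<epsilon> \<longrightarrow> \<epsilon> < 1 \<longrightarrow> dst I f \<ge> ereal \<epsilon> \<longrightarrow>
               measure_pmf.prob (red I) {(I', F). dst' I' (F f) \<ge> ereal (c1 * \<epsilon>)} \<ge> 9/10)))"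

end

theory Submission
  imports Defs
begin


lemma eqv_const:
  assumes "\<forall>(u, v) \<in> set eqs. g u = g v"
    and "(x, y) \<in> (set eqs \<union> (set eqs)\<inverse>)\<^sup>*"
  shows "g x = g y"
  using assms(2)
proof (induction rule: rtrancl_induct)
  case base then show ?case by simp
next
  case (step y z)
  then show ?case using assms(1) by auto
qed

lemma pp_embed:
  fixes ts :: "nat list" and \<phi> :: "nat \<Rightarrow> nat"
    and rel :: "'r \<Rightarrow> 'a list set"
  assumes pp: "pp_definable rel ar (length ts) D"
    and sep: "\<forall>i<length ts. \<forall>j<length ts. i \<noteq> j \<longrightarrow> (\<exists>as\<in>D. length as = length ts \<and> as!i \<noteq> as!j)"
    and phi: "inj \<phi>" "\<forall>u. \<phi> u \<notin> set ts"
  shows "\<exists>cons'. (\<forall>(r,xs)\<in>set cons'. length xs = ar r) \<and>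
     (\<forall>G. (\<forall>(r,xs)\<in>set cons'. map G xs \<in> rel r) \<longrightarrow> map G ts \<in> D) \<and>
     (\<forall>G0. map G0 ts \<in> D \<longrightarrow> (\<exists>G. (\<forall>x\<in>set ts. G x = G0 x) \<and> (\<forall>(r,xs)\<in>set cons'. map G xs \<in> rel r)))"
proof -
  define k where "k = length ts"
  obtain E :: "nat set" and cons :: "('r \<times> nat list) list" and eqs :: "(nat \<times> nat) list" where
    cl: "\<forall>(r, xs) \<in> set cons. length xs = ar r \<and> set xs \<subseteq> {0..<k} \<union> E" and
    iff: "\<forall>as. length as = k \<longrightarrow>
           (as \<in> D \<longleftrightarrow>
             (\<exists>g :: nat \<Rightarrow> 'a. (\<forall>i<k. g i = as ! i) \<and>
                 (\<forall>(r, xs) \<in> set cons. map g xs \<in> rel r) \<and>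
                 (\<forall>(u, v) \<in> set eqs. g u = g v)))"
    using pp unfolding pp_definable_def k_def by blast
  define eqv where "eqv = (set eqs \<union> (set eqs)\<inverse>)\<^sup>*"
  have symE: "(v, u) \<in> eqv" if "(u, v) \<in> eqv" for u v
  proof -
    have "sym (set eqs \<union> (set eqs)\<inverse>)" by (simp add: sym_Un_converse)
    then have "sym eqv" unfolding eqv_def by (rule sym_rtrancl)
    then show ?thesis using that by (meson symD)
  qed
  have transE: "(u, w) \<in> eqv" if "(u, v) \<in> eqv" "(v, w) \<in> eqv" for u v w
    using that unfolding eqv_def by (meson rtrancl_trans)
  have reflE: "(u, u) \<in> eqv" for u unfolding eqv_def by simp
  have uniq: "i = j" if ij: "i < k" "j < k" "(i, j) \<in> eqv" for i j
  proof (rule ccontr)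
    assume "i \<noteq> j"
    then obtain as where as: "as \<in> D" "length as = k" "as!i \<noteq> as!j"
      using sep ij unfolding k_def by blast
    then obtain g where g: "\<forall>i<k. g i = as ! i" "\<forall>(u, v) \<in> set eqs. g u = g v"
      using iff by blast
    have "g i = g j" using eqv_const[OF g(2)] ij(3) unfolding eqv_def by blast
    then show False using g(1) ij as(3) by auto
  qed
  define \<tau> where "\<tau> u = (if \<exists>i. i < k \<and> (u, i) \<in> eqv then ts ! (LEAST i. i < k \<and> (u, i) \<in> eqv)
                         else \<phi> (LEAST v. (u, v) \<in> eqv))" for u
  have tau_inv: "\<tau> u = \<tau> v" if "(u, v) \<in> eqv" for u v
  proof -
    have e1: "(\<lambda>i. i < k \<and> (u, i) \<in> eqv) = (\<lambda>i. i < k \<and> (v, i) \<in> eqv)"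
      using that symE transE by blast
    have e2: "(\<lambda>w. (u, w) \<in> eqv) = (\<lambda>w. (v, w) \<in> eqv)"
      using that symE transE by blast
    show ?thesis unfolding \<tau>_def using e1 e2 by metis
  qed
  have tau_free: "\<tau> i = ts ! i" if "i < k" for i
  proof -
    have "(LEAST j. j < k \<and> (i, j) \<in> eqv) = i"
      by (rule Least_equality) (use that reflE uniq in auto)
    then show ?thesis unfolding \<tau>_def using that reflE by auto
  qed
  define cons' where "cons' = map (\<lambda>(r, xs). (r, map \<tau> xs)) cons"
  have "(\<forall>(r,xs)\<in>set cons'. length xs = ar r)"
    using cl unfolding cons'_def by auto
  moreover have "(\<forall>G. (\<forall>(r,xs)\<in>set cons'. map G xs \<in> rel r) \<longrightarrow> map G ts \<in> D)"
  proof (intro allI impI)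
    fix G assume G: "\<forall>(r,xs)\<in>set cons'. map G xs \<in> rel r"
    define h where "h = G \<circ> \<tau>"
    have "\<forall>i<k. h i = map G ts ! i" using tau_free unfolding h_def k_def by auto
    moreover have "\<forall>(r, xs) \<in> set cons. map h xs \<in> rel r"
      using G unfolding cons'_def h_def by auto
    moreover have "\<forall>(u, v) \<in> set eqs. h u = h v"
    proof (clarify)
      fix u v assume "(u, v) \<in> set eqs"
      then have "(u, v) \<in> eqv" unfolding eqv_def by auto
      then show "h u = h v" unfolding h_def using tau_inv by simp
    qed
    ultimately show "map G ts \<in> D" using iff[rule_format, of "map G ts"] unfolding k_def by auto
  qed
  moreover have "(\<forall>G0. map G0 ts \<in> D \<longrightarrow> (\<exists>G. (\<forall>x\<in>set ts. G x = G0 x) \<and> (\<forall>(r,xs)\<in>set cons'. map G xs \<in> rel r)))"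
  proof (intro allI impI)
    fix G0 assume D0: "map G0 ts \<in> D"
    then obtain g where g: "\<forall>i<k. g i = map G0 ts ! i" "\<forall>(r, xs) \<in> set cons. map g xs \<in> rel r"
        "\<forall>(u, v) \<in> set eqs. g u = g v"
      using iff[rule_format, of "map G0 ts"] unfolding k_def by auto
    have gE: "g x = g y" if "(x, y) \<in> eqv" for x y
      using eqv_const[OF g(3)] that unfolding eqv_def by blast
    define G where "G x = (if x \<in> set ts then G0 x else g (inv \<phi> x))" for x
    have Gt: "G (\<tau> u) = g u" for u
    proof (cases "\<exists>i. i < k \<and> (u, i) \<in> eqv")
      case True
      define i0 where "i0 = (LEAST i. i < k \<and> (u, i) \<in> eqv)"
      have i0: "i0 < k \<and> (u, i0) \<in> eqv" unfolding i0_def using True by (metis (mono_tags, lifting) LeastI)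
      have "\<tau> u = ts ! i0" unfolding \<tau>_def i0_def using True by simp
      moreover have "ts ! i0 \<in> set ts" using i0 unfolding k_def by simp
      ultimately have "G (\<tau> u) = G0 (ts ! i0)" unfolding G_def by simp
      also have "\<dots> = g i0" using g(1) i0 unfolding k_def by simp
      also have "\<dots> = g u" using gE symE i0 by metis
      finally show ?thesis .
    next
      case False
      define m where "m = (LEAST v. (u, v) \<in> eqv)"
      have m: "(u, m) \<in> eqv" unfolding m_def using reflE by (metis LeastI)
      have "\<tau> u = \<phi> m" unfolding \<tau>_def m_def using False by auto
      then have "G (\<tau> u) = g m" unfolding G_def using phi by simp
      also have "\<dots> = g u" using gE symE m by metis
      finally show ?thesis .
    qed
    have "\<forall>x\<in>set ts. G x = G0 x" unfolding G_def by simp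
    moreover have "\<forall>(r,xs)\<in>set cons'. map G xs \<in> rel r"
    proof (clarify)
      fix r xs assume "(r, xs) \<in> set cons'"
      then obtain ys where "(r, ys) \<in> set cons" "xs = map \<tau> ys" unfolding cons'_def by auto
      moreover have "map G (map \<tau> ys) = map g ys" using Gt by simp
      moreover have "map g ys \<in> rel r" using g(2) calculation(1) by blast
      ultimately show "map G xs \<in> rel r" by metis
    qed
    ultimately show "\<exists>G. (\<forall>x\<in>set ts. G x = G0 x) \<and> (\<forall>(r,xs)\<in>set cons'. map G xs \<in> rel r)" by blast
  qed
  ultimately show ?thesis by blast
qed

lemma gen_single:
  assumes "G \<subseteq> {L0}" "trans L0"
  shows "gen_sublattice G \<subseteq> {L0}"
proof
  fix x assume "x \<in> gen_sublattice G"
  then show "x \<in> {L0}"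
    by induction (use assms in \<open>auto simp: trancl_id\<close>)
qed

lemma quot_single:
  assumes "equiv {p} r"
  shows "{p} // r = {{p}}"
proof -
  have "r \<subseteq> {p} \<times> {p}" "(p, p) \<in> r" using assms unfolding equiv_def refl_on_def by auto
  then have "r `` {p} = {p}" by auto
  then show ?thesis unfolding quotient_def by auto
qed

lemma pent_two:
  assumes "equiv P a" "equiv P b" "equiv P c" "nontrivial (pent_L P a b c)"
  shows "\<exists>p\<in>P. \<exists>p'\<in>P. p \<noteq> p'"
proof (rule ccontr)
  assume H: "\<not> ?thesis"
  have "{pent_alpha P a c bb | bb. bb \<in> pent_B P b} \<subseteq> {{(P, P)}}"
  proof (cases "P = {}")
    case True
    then show ?thesis unfolding pent_B_def by simp
  next
    case False
    then obtain p where P: "P = {p}" using H by blast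
    have C: "pent_C P c = {{p}}" unfolding pent_C_def P by (rule quot_single) (use assms P in simp)
    have B: "pent_B P b = {{p}}" unfolding pent_B_def P by (rule quot_single) (use assms P in simp)
    have "(p, p) \<in> a" using assms(1) P unfolding equiv_def refl_on_def by auto
    then have "pent_alpha P a c {p} = {(P, P)}" unfolding pent_alpha_def C using P by auto
    then show ?thesis using B by auto
  qed
  moreover have "trans {(P, P)}" by (simp add: trans_def)
  ultimately have "pent_L P a b c \<subseteq> {{(P, P)}}" unfolding pent_L_def by (rule gen_single)
  then show False using assms(4) unfolding nontrivial_def by auto
qed

lemma q_some:
  assumes "equiv A r" "X \<in> A // r"
  shows "(SOME x. x \<in> X) \<in> X" "(SOME x. x \<in> X) \<in> A"
proof -
  have "X \<noteq> {}" using assms by (rule in_quotient_imp_non_empty)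
  then show "(SOME x. x \<in> X) \<in> X" by (simp add: some_in_eq)
  then show "(SOME x. x \<in> X) \<in> A" using in_quotient_imp_subset[OF assms] by blast
qed

lemma q_class:
  assumes "equiv A r" "X \<in> A // r" "x \<in> X"
  shows "r `` {x} = X"
proof -
  obtain y where y: "y \<in> A" "X = r `` {y}" using assms(2) by (auto elim: quotientE)
  then have "(y, x) \<in> r" using assms(3) by simp
  then have "r `` {y} = r `` {x}" using assms(1) by (metis equiv_class_eq)
  then show ?thesis using y by simp
qed

definition tsl :: "nat \<Rightarrow> pent_inst \<Rightarrow> nat list" where
  "tsl n I = map (\<lambda>i. 4 * i+1) [0..<n] @ map (\<lambda>v. 4 * v) (sorted_list_of_set (pX I \<union> pY I \<union> pEX I \<union> pEY I))
      @ concat (map (\<lambda>j. [8 * j+2, 8 * j+6]) [0..<length (patoms I)])"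

definition atom_cons :: "'r \<Rightarrow> 'r \<Rightarrow> 'r \<Rightarrow> pent_inst \<Rightarrow> ('r \<times> nat list) list" where
  "atom_cons sa sb sg I = concat (map (\<lambda>j. case patoms I ! j of (u, v, v') \<Rightarrow>
     [(sb, [8 * j+2, 4 * u]), (sg, [8 * j+2, 4 * v]), (sb, [8 * j+6, 4 * u]), (sg, [8 * j+6, 4 * v']), (sa, [8 * j+2, 8 * j+6])])
     [0..<length (patoms I)])"

definition eq_cons :: "'r \<Rightarrow> 'r \<Rightarrow> pent_inst \<Rightarrow> ('r \<times> nat list) list" where
  "eq_cons sb sg I = map (\<lambda>(u, v). if u \<in> pX I \<union> pEX I then (sb, [4 * u, 4 * v]) else (sg, [4 * u, 4 * v])) (peqs I)"

definition CV :: "nat \<Rightarrow> pent_inst \<Rightarrow> nat set" where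
  "CV n I = (\<lambda>v. 4 * v) ` (pX I \<union> pY I) \<union> (\<lambda>i. 4 * i+1) ` {..<n}"

definition W :: "nat \<Rightarrow> pent_inst \<Rightarrow> nat \<Rightarrow> real" where
  "W n I w = (if w mod 4 = 0 then pweight I (w div 4) / 2 else if w mod 4 = 1 then 1 / (2 * real n) else 0)"

definition mkI :: "nat \<Rightarrow> ('r \<times> nat list) list \<Rightarrow> pent_inst \<Rightarrow> 'r csp_inst" where
  "mkI n cs I = \<lparr>cvars = CV n I, cevars = (\<Union>(r, xs)\<in>set cs. set xs) - CV n I, ccons = cs, cweight = W n I\<rparr>"

definition Fm :: "'a list \<Rightarrow> (nat \<Rightarrow> 'a set) \<Rightarrow> nat \<Rightarrow> 'a" where
  "Fm ps f w = (if w mod 4 = 0 then SOME x. x \<in> f (w div 4) else ps ! (w div 4))"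



lemma m41[simp]: "(4 * i + 1) mod 4 = (1::nat)" "(4 * i + 1) div 4 = (i::nat)"
   "Suc (4 * i) mod 4 = (1::nat)" "Suc (4 * i) div 4 = (i::nat)" "\<not> 4 dvd Suc (4 * i)"
  by presburger+

lemma m40[simp]: "(4 * i) mod 4 = (0::nat)" "(4 * i) div 4 = (i::nat)"
  by simp_all

lemma m8[simp]: "(8 * j + 2) mod 4 = (2::nat)" "(8 * j + 2) mod 8 = (2::nat)" "(8 * j + 2) div 8 = (j::nat)"
   "Suc (Suc (8 * j)) mod 4 = (2::nat)" "Suc (Suc (8 * j)) mod 8 = (2::nat)" "Suc (Suc (8 * j)) div 8 = (j::nat)"
   "(8 * j + 6) mod 4 = (2::nat)" "(8 * j + 6) mod 8 = (6::nat)" "(8 * j + 6) div 8 = (j::nat)"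
  by presburger+

lemma binrelD: "(x, y) \<in> binrel rel s \<Longrightarrow> [x, y] \<in> rel s"
  unfolding binrel_def by simp

lemma CV_disj: "(\<lambda>v. 4 * v) ` A \<inter> (\<lambda>i. 4 * i + 1) ` B = ({}::nat set)"
proof -
  have "4 * v \<noteq> 4 * i + (1::nat)" for v i by presburger
  then show ?thesis by auto
qed

lemma set_tsl: "set (tsl n I) = (\<lambda>i. 4 * i + 1) ` {..<n} \<union>
   (\<lambda>v. 4 * v) ` (pX I \<union> pY I \<union> pEX I \<union> pEY I) \<union>
   (\<lambda>j. 8 * j + 2) ` {..<length (patoms I)} \<union> (\<lambda>j. 8 * j + 6) ` {..<length (patoms I)}"
  if "finite (pX I \<union> pY I \<union> pEX I \<union> pEY I)"
  using that unfolding tsl_def by (auto simp: lessThan_atLeast0)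

lemma ts_mem:
  assumes "finite (pX I \<union> pY I \<union> pEX I \<union> pEY I)"
  shows "i < n \<Longrightarrow> 4 * i + 1 \<in> set (tsl n I)"
    "v \<in> pX I \<union> pY I \<union> pEX I \<union> pEY I \<Longrightarrow> 4 * v \<in> set (tsl n I)"
    "j < length (patoms I) \<Longrightarrow> 8 * j + 2 \<in> set (tsl n I)"
    "j < length (patoms I) \<Longrightarrow> 8 * j + 6 \<in> set (tsl n I)"
  using set_tsl[OF assms, of n] by auto

lemma tsl_nth: "i < n \<Longrightarrow> tsl n I ! i = 4 * i + 1"
  unfolding tsl_def by (simp add: nth_append)

lemma tsl_len: "n \<le> length (tsl n I)"
  unfolding tsl_def by simp

lemma tsl_mod: "w \<in> set (tsl n I) \<Longrightarrow> w mod 4 \<noteq> 3"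
  unfolding tsl_def by auto

lemma atom_cons_mem:
  assumes "j < length (patoms I)" "patoms I ! j = (u, v, v')"
  shows "(sb, [8 * j + 2, 4 * u]) \<in> set (atom_cons sa sb sg I)"
    "(sg, [8 * j + 2, 4 * v]) \<in> set (atom_cons sa sb sg I)"
    "(sb, [8 * j + 6, 4 * u]) \<in> set (atom_cons sa sb sg I)"
    "(sg, [8 * j + 6, 4 * v']) \<in> set (atom_cons sa sb sg I)"
    "(sa, [8 * j + 2, 8 * j + 6]) \<in> set (atom_cons sa sb sg I)"
  using assms unfolding atom_cons_def by (auto intro!: bexI[of _ j])

lemma atom_cons_cases:
  assumes "(r, xs) \<in> set (atom_cons sa sb sg I)"
  shows "\<exists>j u v v'. j < length (patoms I) \<and> patoms I ! j = (u, v, v') \<and>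
     ((r, xs) = (sb, [8 * j + 2, 4 * u]) \<or> (r, xs) = (sg, [8 * j + 2, 4 * v]) \<or>
      (r, xs) = (sb, [8 * j + 6, 4 * u]) \<or> (r, xs) = (sg, [8 * j + 6, 4 * v']) \<or>
      (r, xs) = (sa, [8 * j + 2, 8 * j + 6]))"
proof -
  from assms obtain j where j: "j \<in> {0..<length (patoms I)}" and m: "(r, xs) \<in> set (case patoms I ! j of (u, v, v') \<Rightarrow>
     [(sb, [8 * j + 2, 4 * u]), (sg, [8 * j + 2, 4 * v]), (sb, [8 * j + 6, 4 * u]), (sg, [8 * j + 6, 4 * v']), (sa, [8 * j + 2, 8 * j + 6])])"
    unfolding atom_cons_def set_concat set_map set_upt by blast
  obtain u v v' where e: "patoms I ! j = (u, v, v')" by (cases "patoms I ! j") auto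
  have j': "j < length (patoms I)" using j by simp
  have "(r, xs) \<in> set [(sb, [8 * j + 2, 4 * u]), (sg, [8 * j + 2, 4 * v]), (sb, [8 * j + 6, 4 * u]), (sg, [8 * j + 6, 4 * v']), (sa, [8 * j + 2, 8 * j + 6])]"
    using m e by simp
  then have "(r, xs) = (sb, [8 * j + 2, 4 * u]) \<or> (r, xs) = (sg, [8 * j + 2, 4 * v]) \<or>
      (r, xs) = (sb, [8 * j + 6, 4 * u]) \<or> (r, xs) = (sg, [8 * j + 6, 4 * v']) \<or>
      (r, xs) = (sa, [8 * j + 2, 8 * j + 6])" by (simp only: set_simps insert_iff empty_iff simp_thms)
  then show ?thesis using j' e by blast
qed

theorem mainTheorem16:
  fixes rel :: "'r::finite \<Rightarrow> 'a::finite list set"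
    and ar :: "'r \<Rightarrow> nat"
    and sa sb sg :: 'r
    and Pc :: "'a set set"
    and P :: "'a set"
  assumes rel_arity: "\<forall>r. \<forall>xs \<in> rel r. length xs = ar r"
    and ar_a: "ar sa = 2" and ar_b: "ar sb = 2" and ar_g: "ar sg = 2"
    and fin_Pc: "finite Pc"
    and pentagons: "\<forall>Q \<in> Pc. is_pentagon Q (binrel rel sa \<inter> Q \<times> Q)
                                        (binrel rel sb \<inter> Q \<times> Q) (binrel rel sg \<inter> Q \<times> Q)"
    and ppdef: "\<forall>k \<ge> 1. pp_definable rel ar k {as. length as = k \<and> (\<exists>Q \<in> Pc. set as \<subseteq> Q)}"
    and P_in: "P \<in> Pc"
    and P_nontriv: "nontrivial (pent_L P (binrel rel sa \<inter> P \<times> P) (binrel rel sb \<inter> P \<times> P)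
                                          (binrel rel sg \<inter> P \<times> P))"
    and P_max: "\<forall>Q \<in> Pc. Q \<noteq> P \<longrightarrow> \<not> P \<subseteq> Q"
  shows "linear_reduction
           pent_wf pent_vars
           (pent_assign P (binrel rel sb \<inter> P \<times> P) (binrel rel sg \<inter> P \<times> P))
           (pent_sat P (binrel rel sa \<inter> P \<times> P) (binrel rel sb \<inter> P \<times> P) (binrel rel sg \<inter> P \<times> P))
           (pent_dist P (binrel rel sa \<inter> P \<times> P) (binrel rel sb \<inter> P \<times> P) (binrel rel sg \<inter> P \<times> P))
           (csp_wf ar) cvars (\<lambda>_ _. True) (csp_sat rel) (csp_dist rel)"
proof -
  define a where "a = binrel rel sa \<inter> P \<times> P"
  define b where "b = binrel rel sb \<inter> P \<times> P"
  define c where "c = binrel rel sg \<inter> P \<times> P"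
  have pent: "is_pentagon P a b c" using pentagons P_in unfolding a_def b_def c_def by blast
  then have finP: "finite P" and ea: "equiv P a" and eb: "equiv P b" and ec: "equiv P c"
    unfolding is_pentagon_def by auto
  obtain p p' where pp: "p \<in> P" "p' \<in> P" "p \<noteq> p'"
    using pent_two[OF ea eb ec] P_nontriv unfolding a_def b_def c_def by blast
  obtain ps where ps: "distinct ps" "set ps = P" using finite_distinct_list[OF finP] by blast
  define n where "n = length ps"
  have n1: "n \<ge> 1" unfolding n_def using ps pp(1) by (cases ps) auto
  define D where "D k = {as. length as = k \<and> (\<exists>Q\<in>Pc. set as \<subseteq> Q)}" for k
  define \<phi> where "\<phi> u = 4 * u + 3" for u :: nat
  define Prop where "Prop ts cons' \<longleftrightarrow> (\<forall>(r,xs)\<in>set cons'. length xs = ar r) \<and>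
     (\<forall>G. (\<forall>(r,xs)\<in>set cons'. map G xs \<in> rel r) \<longrightarrow> map G ts \<in> D (length ts)) \<and>
     (\<forall>G0. map G0 ts \<in> D (length ts) \<longrightarrow> (\<exists>G. (\<forall>x\<in>set ts. G x = G0 x) \<and> (\<forall>(r,xs)\<in>set cons'. map G xs \<in> rel r)))"
    for ts :: "nat list" and cons' :: "('r \<times> nat list) list"
  have emb: "\<forall>I. \<exists>cons'. Prop (tsl n I) cons'"
  proof
    fix I
    let ?ts = "tsl n I"
    have len: "length ?ts \<ge> 1" using tsl_len[of n I] n1 by linarith
    have ppd: "pp_definable rel ar (length ?ts) (D (length ?ts))" using ppdef len unfolding D_def by auto
    have sep: "\<forall>i<length ?ts. \<forall>j<length ?ts. i \<noteq> j \<longrightarrow> (\<exists>as\<in>D (length ?ts). length as = length ?ts \<and> as!i \<noteq> as!j)"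
    proof (intro allI impI)
      fix i j assume ij: "i < length ?ts" "j < length ?ts" "i \<noteq> j"
      let ?as = "(replicate (length ?ts) p)[j := p']"
      have "set ?as \<subseteq> P" using set_update_subset_insert[of "replicate (length ?ts) p" j p'] pp by auto
      then have "?as \<in> D (length ?ts)" unfolding D_def using P_in by auto
      moreover have "?as ! i \<noteq> ?as ! j" using ij pp by simp
      ultimately show "\<exists>as\<in>D (length ?ts). length as = length ?ts \<and> as!i \<noteq> as!j"
        by (intro bexI[where x="?as"] conjI) simp_all
    qed
    have phi: "inj \<phi>" "\<forall>u. \<phi> u \<notin> set ?ts"
      proof -
      have m3: "(4 * u + 3) mod 4 = (3::nat)" for u by presburger
      show "inj \<phi>" unfolding \<phi>_def by (auto simp: inj_def)
      show "\<forall>u. \<phi> u \<notin> set ?ts" unfolding \<phi>_def using tsl_mod[of _ n I] m3 by metis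
    qed
    from pp_embed[OF ppd sep phi] show "\<exists>cons'. Prop ?ts cons'" unfolding Prop_def by blast
  qed
  then obtain CF where CF: "\<forall>I. Prop (tsl n I) (CF I)" by metis
  define cs where "cs I = atom_cons sa sb sg I @ eq_cons sb sg I @ CF I" for I
  define red where "red I = return_pmf (mkI n (cs I) I, Fm ps)" for I

  have P1: "csp_wf ar (mkI n (cs I) I)" if wf: "pent_wf I" for I
  proof -
    have fin: "finite (pX I)" "finite (pY I)" using wf unfolding pent_wf_def by auto
    have finCV: "finite (CV n I)" unfolding CV_def using fin by auto
    have lens: "length xs = ar r" if rx: "(r, xs) \<in> set (cs I)" for r xs
    proof -
      consider "(r, xs) \<in> set (atom_cons sa sb sg I)" | "(r, xs) \<in> set (eq_cons sb sg I)" | "(r, xs) \<in> set (CF I)"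
        using rx unfolding cs_def by auto
      then show ?thesis
      proof cases
        case 1 then show ?thesis using atom_cons_cases[OF 1] ar_a ar_b ar_g by auto
      next
        case 2 then show ?thesis unfolding eq_cons_def using ar_b ar_g by (auto split: if_splits)
      next
        case 3 then show ?thesis using CF unfolding Prop_def by auto
      qed
    qed
    have wpos: "\<forall>v \<in> CV n I. 0 \<le> W n I v"
      using wf unfolding CV_def W_def pent_wf_def pent_vars_def by auto
    have "(\<Sum>w\<in>CV n I. W n I w) = (\<Sum>w\<in>(\<lambda>v. 4 * v) ` (pX I \<union> pY I). W n I w) + (\<Sum>w\<in>(\<lambda>i. 4 * i + 1) ` {..<n}. W n I w)"
      unfolding CV_def by (rule sum.union_disjoint) (use fin CV_disj in auto)
    also have "(\<Sum>w\<in>(\<lambda>v. 4 * v) ` (pX I \<union> pY I). W n I w) = (\<Sum>v\<in>pX I \<union> pY I. pweight I v / 2)"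
      by (subst sum.reindex) (auto simp: inj_on_def W_def)
    also have "\<dots> = (\<Sum>v\<in>pX I \<union> pY I. pweight I v) / 2" by (simp add: sum_divide_distrib)
    also have "\<dots> = 1 / 2" using wf unfolding pent_wf_def pent_vars_def by simp
    also have "(\<Sum>w\<in>(\<lambda>i. 4 * i + 1) ` {..<n}. W n I w) = (\<Sum>i<n. 1 / (2 * real n))"
      by (subst sum.reindex) (auto simp: inj_on_def W_def)
    also have "\<dots> = 1 / 2" using n1 by simp
    finally have wsum: "(\<Sum>w\<in>CV n I. W n I w) = 1" by simp
    show ?thesis unfolding csp_wf_def mkI_def using finCV lens wpos wsum by auto
  qed
  have P2: "card (CV n I) \<le> (n+1) * card (pent_vars I)" if wf: "pent_wf I" for I
  proof -
    have fin: "finite (pent_vars I)" using wf unfolding pent_wf_def pent_vars_def by auto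
    have ne: "pent_vars I \<noteq> {}" using wf unfolding pent_wf_def by auto
    then have c1: "card (pent_vars I) \<ge> 1" using fin by (simp add: Suc_leI card_gt_0_iff)
    have "card (CV n I) \<le> card ((\<lambda>v. 4 * v) ` pent_vars I) + card ((\<lambda>i. 4 * i + 1) ` {..<n})"
      unfolding CV_def pent_vars_def by (rule card_Un_le)
    also have "\<dots> \<le> card (pent_vars I) + n" using card_image_le[OF fin, of "\<lambda>v. 4 * v"]
      card_image_le[of "{..<n}" "\<lambda>i. 4 * i + 1"] by simp
    also have "\<dots> \<le> (n+1) * card (pent_vars I)" using c1 by (simp add: algebra_simps)
    finally show ?thesis .
  qed
  have P3: "\<forall>v'\<in>CV n I. \<exists>S \<subseteq> pent_vars I. card S \<le> 1 \<and> (\<forall>f g. (\<forall>v\<in>S. f v = g v) \<longrightarrow> Fm ps f v' = Fm ps g v')"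
    for I
  proof
    fix v' assume "v' \<in> CV n I"
    then consider v where "v \<in> pent_vars I" "v' = 4 * v" | i where "v' = 4 * i + 1"
      unfolding CV_def pent_vars_def by auto
    then show "\<exists>S \<subseteq> pent_vars I. card S \<le> 1 \<and> (\<forall>f g. (\<forall>v\<in>S. f v = g v) \<longrightarrow> Fm ps f v' = Fm ps g v')"
    proof cases
      case (1 v) then show ?thesis by (intro exI[of _ "{v}"]) (auto simp: Fm_def)
    next
      case (2 i) then show ?thesis by (intro exI[of _ "{}"]) (auto simp: Fm_def)
    qed
  qed
  have P4: "csp_sat rel (mkI n (cs I) I) (Fm ps f)"
    if wf: "pent_wf I" and asg: "pent_assign P b c I f" and sat: "pent_sat P a b c I f" for I f
  proof -
    from sat obtain g where gv: "\<forall>v\<in>pent_vars I. g v = f v"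
      and gX: "\<forall>v\<in>pX I \<union> pEX I. g v \<in> P // b" and gY: "\<forall>v\<in>pY I \<union> pEY I. g v \<in> P // c"
      and gA: "\<forall>(u, v, v')\<in>set (patoms I). (g u, g v, g v') \<in> pent_R P a b c"
      and gE: "\<forall>(u, v)\<in>set (peqs I). g u = g v"
      unfolding pent_sat_def pent_B_def pent_C_def by blast
    define AV where "AV = pX I \<union> pY I \<union> pEX I \<union> pEY I"
    have finAV: "finite AV" using wf unfolding pent_wf_def AV_def by auto
    have disj: "(pX I \<union> pEX I) \<inter> (pY I \<union> pEY I) = {}" using wf unfolding pent_wf_def by auto
    define sel where "sel v = (SOME x. x \<in> g v)" for v
    have selP: "sel v \<in> g v \<and> sel v \<in> P" if "v \<in> AV" for v
    proof (cases "v \<in> pX I \<union> pEX I")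
      case True then show ?thesis unfolding sel_def using q_some[OF eb] gX by blast
    next
      case False then have "v \<in> pY I \<union> pEY I" using that unfolding AV_def by auto
      then show ?thesis unfolding sel_def using q_some[OF ec] gY by blast
    qed
    define wit where "wit j = (case patoms I ! j of (u, v, v') \<Rightarrow>
       SOME q. fst q \<in> g u \<inter> g v \<and> snd q \<in> g u \<inter> g v' \<and> q \<in> a)" for j
    have witP: "fst (wit j) \<in> g u \<inter> g v \<and> snd (wit j) \<in> g u \<inter> g v' \<and> wit j \<in> a
        \<and> fst (wit j) \<in> P \<and> snd (wit j) \<in> P"
      if j: "j < length (patoms I)" "patoms I ! j = (u, v, v')" for j u v v'
    proof -
      have "(u, v, v') \<in> set (patoms I)" using j by (metis nth_mem)
      then have "(g u, g v, g v') \<in> pent_R P a b c" using gA by blast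
      then obtain q q' where "q \<in> g u \<inter> g v" "q' \<in> g u \<inter> g v'" "(q, q') \<in> a"
        unfolding pent_R_def pent_alpha_def by blast
      then have ex: "\<exists>q. fst q \<in> g u \<inter> g v \<and> snd q \<in> g u \<inter> g v' \<and> q \<in> a"
        by (intro exI[of _ "(q, q')"]) simp
      have "fst (wit j) \<in> g u \<inter> g v \<and> snd (wit j) \<in> g u \<inter> g v' \<and> wit j \<in> a"
        unfolding wit_def j(2) using someI_ex[OF ex] by simp
      moreover have "wit j \<in> P \<times> P" using calculation ea unfolding equiv_def refl_on_def by blast
      ultimately show ?thesis by auto
    qed
    define G0 where "G0 w = (if w mod 4 = 0 then sel (w div 4) else if w mod 4 = 1 then ps ! (w div 4)
        else if w mod 8 = 2 then fst (wit (w div 8)) else snd (wit (w div 8)))" for w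
    have G0v: "G0 (4 * v) = sel v" for v unfolding G0_def by simp
    have G0e: "G0 (4 * i + 1) = ps ! i" for i unfolding G0_def by simp
    have G02: "G0 (8 * j + 2) = fst (wit j)" for j
    proof -
      have "(8 * j + 2) mod 4 \<noteq> (0::nat)" "(8 * j + 2) mod 4 \<noteq> (1::nat)" by simp_all
      then show ?thesis unfolding G0_def by simp
    qed
    have G06: "G0 (8 * j + 6) = snd (wit j)" for j
    proof -
      have "(8 * j + 6) mod 4 \<noteq> (0::nat)" "(8 * j + 6) mod 4 \<noteq> (1::nat)" "(8 * j + 6) mod 8 \<noteq> (2::nat)" by simp_all
      then show ?thesis unfolding G0_def by simp
    qed
    let ?ts = "tsl n I"
    have inD: "map G0 ?ts \<in> D (length ?ts)"
    proof -
      have "set (map G0 ?ts) \<subseteq> P"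
      proof
        fix x assume "x \<in> set (map G0 ?ts)"
        then obtain w where w: "w \<in> set ?ts" "x = G0 w" by auto
        then consider i where "i < n" "w = 4 * i + 1" | v where "v \<in> AV" "w = 4 * v"
          | j where "j < length (patoms I)" "w = 8 * j + 2" | j where "j < length (patoms I)" "w = 8 * j + 6"
          using set_tsl[OF finAV[unfolded AV_def], of n] unfolding AV_def by auto
        then show "x \<in> P"
        proof cases
          case 1 then show ?thesis using w G0e ps n_def by auto
        next
          case 2 then show ?thesis using w G0v selP by auto
        next
          case (3 j)
          obtain u v v' where "patoms I ! j = (u, v, v')" by (cases "patoms I ! j") auto
          then show ?thesis using 3 w G02 witP by metis
        next
          case (4 j)
          obtain u v v' where "patoms I ! j = (u, v, v')" by (cases "patoms I ! j") auto
          then show ?thesis using 4 w G06 witP by metis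
        qed
      qed
      then show ?thesis unfolding D_def using P_in by auto
    qed
    then obtain G where GG0: "\<forall>x\<in>set ?ts. G x = G0 x" and GCF: "\<forall>(r,xs)\<in>set (CF I). map G xs \<in> rel r"
      using CF unfolding Prop_def by blast
    have tsm: "i < n \<Longrightarrow> 4 * i + 1 \<in> set ?ts" "v \<in> AV \<Longrightarrow> 4 * v \<in> set ?ts"
      "j < length (patoms I) \<Longrightarrow> 8 * j + 2 \<in> set ?ts" "j < length (patoms I) \<Longrightarrow> 8 * j + 6 \<in> set ?ts"
      for i v j using ts_mem[OF finAV[unfolded AV_def]] unfolding AV_def by auto
    have Gv: "v \<in> AV \<Longrightarrow> G (4 * v) = sel v" for v using GG0 tsm G0v by metis
    have Ge: "i < n \<Longrightarrow> G (4 * i + 1) = ps ! i" for i using GG0 tsm G0e by metis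
    have G2: "j < length (patoms I) \<Longrightarrow> G (8 * j + 2) = fst (wit j)" for j using GG0 tsm G02 by metis
    have G6: "j < length (patoms I) \<Longrightarrow> G (8 * j + 6) = snd (wit j)" for j using GG0 tsm G06 by metis
    have bR: "[x, y] \<in> rel sb" if "(x, y) \<in> b" for x y using that unfolding b_def by (auto intro: binrelD)
    have cR: "[x, y] \<in> rel sg" if "(x, y) \<in> c" for x y using that unfolding c_def by (auto intro: binrelD)
    have aR: "[x, y] \<in> rel sa" if "(x, y) \<in> a" for x y using that unfolding a_def by (auto intro: binrelD)
    have agree: "\<forall>w\<in>CV n I. G w = Fm ps f w"
    proof
      fix w assume "w \<in> CV n I"
      then consider v where "v \<in> pX I \<union> pY I" "w = 4 * v" | i where "i < n" "w = 4 * i + 1"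
        unfolding CV_def by auto
      then show "G w = Fm ps f w"
      proof cases
        case (1 v)
        then have "v \<in> AV" "g v = f v" using gv unfolding AV_def pent_vars_def by auto
        then show ?thesis using 1 Gv unfolding Fm_def sel_def by simp
      next
        case (2 i) then show ?thesis using Ge unfolding Fm_def by simp
      qed
    qed
    have cons_ok: "\<forall>(r, xs)\<in>set (cs I). map G xs \<in> rel r"
    proof (clarify)
      fix r xs assume rx: "(r, xs) \<in> set (cs I)"
      consider "(r, xs) \<in> set (atom_cons sa sb sg I)" | "(r, xs) \<in> set (eq_cons sb sg I)" | "(r, xs) \<in> set (CF I)"
        using rx unfolding cs_def by auto
      then show "map G xs \<in> rel r"
      proof cases
        case 1
        then obtain j u v v' where j: "j < length (patoms I)" "patoms I ! j = (u, v, v')" and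
          disj5: "(r, xs) = (sb, [8 * j + 2, 4 * u]) \<or> (r, xs) = (sg, [8 * j + 2, 4 * v]) \<or>
            (r, xs) = (sb, [8 * j + 6, 4 * u]) \<or> (r, xs) = (sg, [8 * j + 6, 4 * v']) \<or>
            (r, xs) = (sa, [8 * j + 2, 8 * j + 6])"
          using atom_cons_cases by metis
        have "(u, v, v') \<in> set (patoms I)" using j by (metis nth_mem)
        then have uv: "u \<in> pX I \<union> pEX I" "v \<in> pY I \<union> pEY I" "v' \<in> pY I \<union> pEY I"
          using wf unfolding pent_wf_def by auto
        then have AVs: "u \<in> AV" "v \<in> AV" "v' \<in> AV" unfolding AV_def by auto
        have W: "fst (wit j) \<in> g u \<inter> g v \<and> snd (wit j) \<in> g u \<inter> g v' \<and> wit j \<in> a" using witP[OF j] by blast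
        have gub: "g u \<in> P // b" using gX uv by blast
        have gvc: "g v \<in> P // c" "g v' \<in> P // c" using gY uv by blast+
        have s1: "(fst (wit j), sel u) \<in> b" "(snd (wit j), sel u) \<in> b"
          using in_quotient_imp_in_rel[OF eb gub] W selP[OF AVs(1)] by auto
        have s2: "(fst (wit j), sel v) \<in> c" "(snd (wit j), sel v') \<in> c"
          using in_quotient_imp_in_rel[OF ec gvc(1)] in_quotient_imp_in_rel[OF ec gvc(2)]
            W selP[OF AVs(2)] selP[OF AVs(3)] by auto
        have s3: "(fst (wit j), snd (wit j)) \<in> a" using W by simp
        show ?thesis using disj5 G2[OF j(1)] G6[OF j(1)] Gv[OF AVs(1)] Gv[OF AVs(2)] Gv[OF AVs(3)]
            bR[OF s1(1)] bR[OF s1(2)] cR[OF s2(1)] cR[OF s2(2)] aR[OF s3] by auto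
      next
        case 2
        then obtain u v where uv: "(u, v) \<in> set (peqs I)"
          and rxe: "(r, xs) = (if u \<in> pX I \<union> pEX I then (sb, [4 * u, 4 * v]) else (sg, [4 * u, 4 * v]))"
          unfolding eq_cons_def by auto
        have sorts: "(u \<in> pX I \<union> pEX I \<and> v \<in> pX I \<union> pEX I) \<or> (u \<in> pY I \<union> pEY I \<and> v \<in> pY I \<union> pEY I)"
          using wf uv unfolding pent_wf_def by auto
        have AVs: "u \<in> AV" "v \<in> AV" using sorts unfolding AV_def by auto
        have same: "sel u = sel v" unfolding sel_def using gE uv by auto
        show ?thesis
        proof (cases "u \<in> pX I \<union> pEX I")
          case True
          have "(sel u, sel u) \<in> b" using selP[OF AVs(1)] eb unfolding equiv_def refl_on_def by auto
          then show ?thesis using rxe True Gv AVs same bR by auto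
        next
          case False
          have "(sel u, sel u) \<in> c" using selP[OF AVs(1)] ec unfolding equiv_def refl_on_def by auto
          then show ?thesis using rxe False Gv AVs same cR by auto
        qed
      next
        case 3 then show ?thesis using GCF by auto
      qed
    qed
    show ?thesis unfolding csp_sat_def mkI_def using agree cons_ok by auto
  qed
  have P5: "csp_dist rel (mkI n (cs I) I) (Fm ps f) \<ge> ereal (1 / (2 * real n) * \<epsilon>)"
    if wf: "pent_wf I" and asg: "pent_assign P b c I f" and "0 < \<epsilon>" "\<epsilon> < 1"
      and dist: "pent_dist P a b c I f \<ge> ereal \<epsilon>" for I f \<epsilon>
  proof -
    define c1 where "c1 = 1 / (2 * real n)"
    have c1pos: "0 < c1" and c1le: "c1 \<le> 1/2" unfolding c1_def using n1 by (auto simp: field_simps)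
    have fin: "finite (pX I)" "finite (pY I)" using wf unfolding pent_wf_def by auto
    define AV where "AV = pX I \<union> pY I \<union> pEX I \<union> pEY I"
    have finAV: "finite AV" using wf unfolding pent_wf_def AV_def by auto
    have disj: "(pX I \<union> pEX I) \<inter> (pY I \<union> pEY I) = {}" using wf unfolding pent_wf_def by auto
    let ?ts = "tsl n I"
    have tsm: "i < n \<Longrightarrow> 4 * i + 1 \<in> set ?ts" "v \<in> AV \<Longrightarrow> 4 * v \<in> set ?ts"
      "j < length (patoms I) \<Longrightarrow> 8 * j + 2 \<in> set ?ts" "j < length (patoms I) \<Longrightarrow> 8 * j + 6 \<in> set ?ts"
      for i v j using ts_mem[OF finAV[unfolded AV_def]] unfolding AV_def by auto
    have finCV: "finite (CV n I)" unfolding CV_def using fin by auto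
    have wpos: "\<forall>v \<in> CV n I. 0 \<le> W n I v"
      using wf unfolding CV_def W_def pent_wf_def pent_vars_def by auto
    have "ereal (c1 * \<epsilon>) \<le> ereal (\<Sum>w\<in>{w \<in> CV n I. Fm ps f w \<noteq> G w}. W n I w)"
      if Gs: "csp_sat rel (mkI n (cs I) I) G" for G
    proof -
      define DS where "DS = {w \<in> CV n I. Fm ps f w \<noteq> G w}"
      have finDS: "finite DS" unfolding DS_def using finCV by auto
      have DSpos: "\<forall>w\<in>DS. 0 \<le> W n I w" using wpos unfolding DS_def by auto
      obtain G'' where agr: "\<forall>v\<in>CV n I. G'' v = G v" and GC: "\<forall>(r, xs)\<in>set (cs I). map G'' xs \<in> rel r"
        using Gs unfolding csp_sat_def mkI_def by auto
      have "c1 * \<epsilon> \<le> (\<Sum>w\<in>DS. W n I w)"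
      proof (cases "\<exists>i<n. G (4 * i + 1) \<noteq> ps ! i")
        case True
        then obtain i where i: "i < n" "G (4 * i + 1) \<noteq> ps ! i" by blast
        have "4 * i + 1 \<in> DS" unfolding DS_def CV_def Fm_def using i by auto
        then have "W n I (4 * i + 1) \<le> (\<Sum>w\<in>DS. W n I w)"
          by (rule member_le_sum) (use finDS DSpos in auto)
        moreover have "W n I (4 * i + 1) = c1" unfolding W_def c1_def by simp
        moreover have "c1 * \<epsilon> \<le> c1" using c1pos \<open>\<epsilon> < 1\<close> by (simp add: mult_left_le)
        ultimately show ?thesis by linarith
      next
        case False
        then have Ge: "G'' (4 * i + 1) = ps ! i" if "i < n" for i
          using agr that unfolding CV_def by auto
        have "\<forall>(r,xs)\<in>set (CF I). map G'' xs \<in> rel r" using GC unfolding cs_def by auto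
        then have "map G'' ?ts \<in> D (length ?ts)" using CF unfolding Prop_def by blast
        then obtain Q where Q: "Q \<in> Pc" "set (map G'' ?ts) \<subseteq> Q" unfolding D_def by auto
        have "P \<subseteq> Q"
        proof
          fix x assume "x \<in> P"
          then obtain i where i: "i < n" "x = ps ! i" using ps unfolding n_def by (metis in_set_conv_nth)
          then show "x \<in> Q" using Q(2) tsm(1)[OF i(1)] Ge[OF i(1)] by auto
        qed
        then have "Q = P" using P_max Q(1) by blast
        then have allP: "G'' w \<in> P" if "w \<in> set ?ts" for w using Q(2) that by auto
        define h where "h v = (if v \<in> pX I \<union> pEX I then b `` {G'' (4 * v)} else c `` {G'' (4 * v)})" for v
        have bI: "(x, y) \<in> b" if "[x, y] \<in> rel sb" "x \<in> P" "y \<in> P" for x y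
          using that unfolding b_def binrel_def by auto
        have cI: "(x, y) \<in> c" if "[x, y] \<in> rel sg" "x \<in> P" "y \<in> P" for x y
          using that unfolding c_def binrel_def by auto
        have aI: "(x, y) \<in> a" if "[x, y] \<in> rel sa" "x \<in> P" "y \<in> P" for x y
          using that unfolding a_def binrel_def by auto
        have hB: "h v \<in> P // b" if "v \<in> pX I \<union> pEX I" for v
          using that allP tsm(2) unfolding h_def AV_def by (auto intro!: quotientI)
        have hC: "h v \<in> P // c" if "v \<in> pY I \<union> pEY I" for v
        proof -
          have "v \<notin> pX I \<union> pEX I" using that disj by auto
          then show ?thesis using that allP tsm(2) unfolding h_def AV_def by (auto intro!: quotientI)
        qed
        have hsat: "pent_sat P a b c I h"
          unfolding pent_sat_def
        proof (intro exI[of _ h] conjI)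
          show "\<forall>v\<in>pent_vars I. h v = h v" by simp
          show "\<forall>v\<in>pX I \<union> pEX I. h v \<in> pent_B P b" using hB unfolding pent_B_def by blast
          show "\<forall>v\<in>pY I \<union> pEY I. h v \<in> pent_C P c" using hC unfolding pent_C_def by blast
          show "\<forall>(u, v, v')\<in>set (patoms I). (h u, h v, h v') \<in> pent_R P a b c"
          proof (clarify)
            fix u v v' assume uvv: "(u, v, v') \<in> set (patoms I)"
            then obtain j where j: "j < length (patoms I)" "patoms I ! j = (u, v, v')"
              by (metis in_set_conv_nth)
            have uv: "u \<in> pX I \<union> pEX I" "v \<in> pY I \<union> pEY I" "v' \<in> pY I \<union> pEY I"
              using wf uvv unfolding pent_wf_def by auto
            have nX: "v \<notin> pX I \<union> pEX I" "v' \<notin> pX I \<union> pEX I" using uv disj by auto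
            have AVs: "u \<in> AV" "v \<in> AV" "v' \<in> AV" using uv unfolding AV_def by auto
            have inc: "(x, y) \<in> set (atom_cons sa sb sg I) \<Longrightarrow> map G'' y \<in> rel x" for x y
              using GC unfolding cs_def by auto
            note am = atom_cons_mem[OF j, where sa=sa and sb=sb and sg=sg]
            define q where "q = G'' (8 * j + 2)"
            define q' where "q' = G'' (8 * j + 6)"
            have PP: "q \<in> P" "q' \<in> P" "G'' (4 * u) \<in> P" "G'' (4 * v) \<in> P" "G'' (4 * v') \<in> P"
              unfolding q_def q'_def using allP tsm j AVs by auto
            have r1: "(q, G'' (4 * u)) \<in> b" using bI[OF _ PP(1) PP(3)] inc[OF am(1)] unfolding q_def by simp
            have r2: "(q, G'' (4 * v)) \<in> c" using cI[OF _ PP(1) PP(4)] inc[OF am(2)] unfolding q_def by simp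
            have r3: "(q', G'' (4 * u)) \<in> b" using bI[OF _ PP(2) PP(3)] inc[OF am(3)] unfolding q'_def by simp
            have r4: "(q', G'' (4 * v')) \<in> c" using cI[OF _ PP(2) PP(5)] inc[OF am(4)] unfolding q'_def by simp
            have r5: "(q, q') \<in> a" using aI[OF _ PP(1) PP(2)] inc[OF am(5)] unfolding q_def q'_def by simp
            have s1: "q \<in> h u \<inter> h v" using r1 r2 uv(1) nX(1) eb ec unfolding h_def equiv_def sym_def by auto
            have s2: "q' \<in> h u \<inter> h v'" using r3 r4 uv(1) nX(2) eb ec unfolding h_def equiv_def sym_def by auto
            show "(h u, h v, h v') \<in> pent_R P a b c"
              unfolding pent_R_def pent_alpha_def pent_B_def pent_C_def
              using hB[OF uv(1)] hC[OF uv(2)] hC[OF uv(3)] s1 s2 r5 by blast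
          qed
          show "\<forall>(u, v)\<in>set (peqs I). h u = h v"
          proof (clarify)
            fix u v assume uv: "(u, v) \<in> set (peqs I)"
            have sorts: "(u \<in> pX I \<union> pEX I \<and> v \<in> pX I \<union> pEX I) \<or> (u \<in> pY I \<union> pEY I \<and> v \<in> pY I \<union> pEY I)"
              using wf uv unfolding pent_wf_def by auto
            have AVs: "u \<in> AV" "v \<in> AV" using sorts unfolding AV_def by auto
            have PP: "G'' (4 * u) \<in> P" "G'' (4 * v) \<in> P" using allP tsm AVs by auto
            have inc: "map G'' [4 * u, 4 * v] \<in> rel (if u \<in> pX I \<union> pEX I then sb else sg)"
            proof -
              have "(if u \<in> pX I \<union> pEX I then (sb, [4 * u, 4 * v]) else (sg, [4 * u, 4 * v])) \<in> set (cs I)"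
                using uv unfolding cs_def eq_cons_def by force
              then show ?thesis using GC by (auto split: if_splits)
            qed
            show "h u = h v"
            proof (cases "u \<in> pX I \<union> pEX I")
              case True
              then have "v \<in> pX I \<union> pEX I" using sorts disj by auto
              moreover have "(G'' (4 * u), G'' (4 * v)) \<in> b" using bI[OF _ PP] inc True by simp
              ultimately show ?thesis using True eb unfolding h_def by (simp add: equiv_class_eq)
            next
              case False
              then have "v \<notin> pX I \<union> pEX I" using sorts disj by auto
              moreover have "(G'' (4 * u), G'' (4 * v)) \<in> c" using cI[OF _ PP] inc False by simp
              ultimately show ?thesis using False ec unfolding h_def by (simp add: equiv_class_eq)
            qed
          qed
        qed
        define S where "S = {v \<in> pent_vars I. f v \<noteq> h v}"
        have "pent_dist P a b c I f \<le> ereal (\<Sum>v\<in>S. pweight I v)"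
          unfolding pent_dist_def wdist_def S_def using hsat by (auto intro!: INF_lower2)
        then have epsS: "\<epsilon> \<le> (\<Sum>v\<in>S. pweight I v)" using dist by (meson ereal_less_eq(3) order_trans)
        have SDS: "(\<lambda>v. 4 * v) ` S \<subseteq> DS"
        proof
          fix w assume "w \<in> (\<lambda>v. 4 * v) ` S"
          then obtain v where v: "v \<in> pent_vars I" "f v \<noteq> h v" "w = 4 * v" unfolding S_def by auto
          have wCV: "w \<in> CV n I" using v unfolding CV_def pent_vars_def by auto
          have "Fm ps f w \<noteq> G w"
          proof
            assume eq: "Fm ps f w = G w"
            then have eq2: "(SOME x. x \<in> f v) = G'' (4 * v)" using agr wCV v(3) unfolding Fm_def by simp
            show False
            proof (cases "v \<in> pX I")
              case True
              then have fb: "f v \<in> P // b" using asg unfolding pent_assign_def pent_B_def by auto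
              have "h v = b `` {SOME x. x \<in> f v}" using True eq2 unfolding h_def by simp
              also have "\<dots> = f v" using q_class[OF eb fb q_some(1)[OF eb fb]] .
              finally show False using v(2) by simp
            next
              case False
              then have vY: "v \<in> pY I" using v(1) unfolding pent_vars_def by auto
              then have nX: "v \<notin> pX I \<union> pEX I" using disj by auto
              have fc: "f v \<in> P // c" using asg vY unfolding pent_assign_def pent_C_def by auto
              have "h v = c `` {SOME x. x \<in> f v}" using nX eq2 unfolding h_def by simp
              also have "\<dots> = f v" using q_class[OF ec fc q_some(1)[OF ec fc]] .
              finally show False using v(2) by simp
            qed
          qed
          then show "w \<in> DS" unfolding DS_def using wCV by simp
        qed
        have "(\<Sum>w\<in>(\<lambda>v. 4 * v) ` S. W n I w) \<le> (\<Sum>w\<in>DS. W n I w)"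
          by (rule sum_mono2[OF finDS SDS]) (use DSpos in auto)
        moreover have "(\<Sum>w\<in>(\<lambda>v. 4 * v) ` S. W n I w) = (\<Sum>v\<in>S. pweight I v) / 2"
          by (subst sum.reindex) (auto simp: inj_on_def W_def sum_divide_distrib)
        moreover have "c1 * \<epsilon> \<le> \<epsilon> / 2" using c1le \<open>0 < \<epsilon>\<close> by (simp add: mult_right_mono)
        ultimately show ?thesis using epsS by linarith
      qed
      then show ?thesis unfolding DS_def by simp
    qed
    then show ?thesis unfolding csp_dist_def wdist_def c1_def
      by (auto simp: mkI_def intro!: INF_greatest)
  qed
  have c1pos: "1 / (2 * real n) > 0" using n1 by simp
  show ?thesis
    unfolding linear_reduction_def a_def[symmetric] b_def[symmetric] c_def[symmetric]
    apply (rule exI[of _ red], rule exI[of _ "n+1"], rule exI[of _ "1 / (2 * real n)"], rule exI[of _ 1])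
    using c1pos P1 P2 P3 P4 P5 unfolding red_def
    by (auto simp: mkI_def)
qed

end
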